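(* Let $P$ be a rectangular box (brick) in $\mathbb{R}^3$ of volume $1$, all of whose edge lengths are at least $\frac{1}{\sqrt{2}}$. Let $e_1,e_2,e_3$ be three pairwise skew edges of $P$, and let $A\in e_1$, $B\in e_2$, $C\in e_3$ be the vertices of a triangle $ABC$. Then at least one side of the triangle $ABC$ has length at most $\sqrt{2}$.
   Context: A brick is a rectangular parallelepiped (box with pairwise orthogonal edge directions). Edges of the brick are its twelve closed edge segments. Three edges are pairwise skew if no two of them are parallel and no two intersect; in a brick such a triple consists of one edge from each of the three edge directions. "The vertices of a triangle lie on the skew edges of the brick" means each vertex lies on a different edge of such a triple. *)

theory Defs
  imports "HOL-Analysis.Analysis"
begin

definition brick_data ::
  "real^3 \<Rightarrow> (nat \<Rightarrow> real^3) \<Rightarrow> (nat \<Rightarrow> real) \<Rightarrow> bool" where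
  "brick_data p u a \<longleftrightarrow>
     (\<forall>i\<in>{1,2,3}. \<forall>j\<in>{1,2,3}. u i \<bullet> u j = (if i = j then 1 else 0)) \<and>
     (\<forall>i\<in>{1,2,3}. a i > 0)"

definition brick_point ::
  "real^3 \<Rightarrow> (nat \<Rightarrow> real^3) \<Rightarrow> (nat \<Rightarrow> real) \<Rightarrow> (nat \<Rightarrow> real) \<Rightarrow> real^3" where
  "brick_point p u a t = p + (\<Sum>i\<in>{1,2,3}. (t i * a i) *\<^sub>R u i)"

definition brick :: "real^3 \<Rightarrow> (nat \<Rightarrow> real^3) \<Rightarrow> (nat \<Rightarrow> real) \<Rightarrow> (real^3) set" where
  "brick p u a = {brick_point p u a t | t. \<forall>i\<in>{1,2,3}. 0 \<le> t i \<and> t i \<le> 1}"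

text \<open>The (closed) edges of the brick parallel to direction i: the coordinate t_i
ranges over [0,1], the other two coordinates are fixed to 0 or 1 (given by
the choice function c, whose value at i is irrelevant).\<close>

definition brick_edge ::
  "real^3 \<Rightarrow> (nat \<Rightarrow> real^3) \<Rightarrow> (nat \<Rightarrow> real) \<Rightarrow> nat \<Rightarrow> (nat \<Rightarrow> real) \<Rightarrow> (real^3) set" where
  "brick_edge p u a i c =
     {brick_point p u a t | t. 0 \<le> t i \<and> t i \<le> 1 \<and> (\<forall>j\<in>{1,2,3}-{i}. t j = c j)}"

definition is_brick_edge ::
  "real^3 \<Rightarrow> (nat \<Rightarrow> real^3) \<Rightarrow> (nat \<Rightarrow> real) \<Rightarrow> nat \<Rightarrow> (real^3) set \<Rightarrow> bool" where
  "is_brick_edge p u a i E \<longleftrightarrow>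
     (\<exists>c. (\<forall>j\<in>{1,2,3}-{i}. c j = 0 \<or> c j = 1) \<and> E = brick_edge p u a i c)"

text \<open>Three edges are pairwise skew: no two parallel (here: they are edges in the three
different directions 1,2,3) and no two intersect.\<close>

definition skew_edge_triple ::
  "real^3 \<Rightarrow> (nat \<Rightarrow> real^3) \<Rightarrow> (nat \<Rightarrow> real) \<Rightarrow> (real^3) set \<Rightarrow> (real^3) set \<Rightarrow> (real^3) set \<Rightarrow> bool" where
  "skew_edge_triple p u a E1 E2 E3 \<longleftrightarrow>
     is_brick_edge p u a 1 E1 \<and> is_brick_edge p u a 2 E2 \<and> is_brick_edge p u a 3 E3 \<and>
     E1 \<inter> E2 = {} \<and> E2 \<inter> E3 = {} \<and> E1 \<inter> E3 = {}"

end

theory Submission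
  imports Defs
begin

lemma mono_bound:
  fixes a b :: real
  assumes fa: "0 \<le> a" and fb: "0 \<le> b" and fm: "b \<le> 14/25*a" and fw: "a \<le> 199/3000"
  shows "i + j \<ge> 1 \<Longrightarrow> a^i * b^j \<le> (14/25)^j * (199/3000)^(i+j-1) * a"
proof -
  assume ij: "i + j \<ge> 1"
  have "b^j \<le> (14/25*a)^j" using fm fb by (rule power_mono)
  hence "a^i * b^j \<le> a^i * (14/25*a)^j" using fa by (simp add: mult_left_mono)
  also have "\<dots> = a^i * ((14/25)^j * a^j)" by (simp only: power_mult_distrib)
  also have "\<dots> = (14/25)^j * a^(i+j)" by (simp only: power_add mult_ac)
  also have "a^(i+j) = a * a^(i+j-1)" using ij by (metis Suc_diff_le diff_Suc_1 power_Suc)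
  also have "a^(i+j-1) \<le> (199/3000)^(i+j-1)" using fw fa by (rule power_mono)
  hence "(14/25)^j * (a * a^(i+j-1)) \<le> (14/25)^j * (a * (199/3000)^(i+j-1))"
    using fa by (simp add: mult_left_mono)
  finally show ?thesis by (simp add: mult_ac)
qed


lemma cert_PA:
  fixes a b :: real
  assumes fa: "0 \<le> a" and fb: "0 \<le> b" and fm: "b \<le> 14/25*a" and fw: "a \<le> 199/3000"
  shows "(2*(2*(2*(a + 2/3) - 1 - (b + 1/2)*(a + 2/3))*((b + 1/2) + (a + 2/3)^2 - (a + 2/3)*(b + 1/2)) + (1 - (b + 1/2))*(a + 2/3)^2*(b + 1/2)))^2 + 4*(b + 1/2)*((a + 2/3) + 2*(2*(a + 2/3) - 1 - (b + 1/2)*(a + 2/3)))*(((b + 1/2) + (a + 2/3)^2)*(2 - 3*(a + 2/3) + 2*(b + 1/2)*(a + 2/3)) + (2*(b + 1/2) - 4)*(a + 2/3)^2*(b + 1/2)) \<le> 0"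
proof -
  have e: "(2*(2*(2*(a + 2/3) - 1 - (b + 1/2)*(a + 2/3))*((b + 1/2) + (a + 2/3)^2 - (a + 2/3)*(b + 1/2)) + (1 - (b + 1/2))*(a + 2/3)^2*(b + 1/2)))^2 + 4*(b + 1/2)*((a + 2/3) + 2*(2*(a + 2/3) - 1 - (b + 1/2)*(a + 2/3)))*(((b + 1/2) + (a + 2/3)^2)*(2 - 3*(a + 2/3) + 2*(b + 1/2)*(a + 2/3)) + (2*(b + 1/2) - 4)*(a + 2/3)^2*(b + 1/2)) = 160/243*b + 3664/729*b^2 + 64/243*b^3 + (-704/81)*b^4 + (-64/27)*a + (-712/81)*a*b + 3680/81*a*b^2 + 3040/81*a*b^3 + (-1024/27)*a*b^4 + (-67/9)*a^2 + (-2368/27)*a^2*b + 260/3*a^2*b^2 + 2608/27*a^2*b^3 + (-160/3)*a^2*b^4 + 59/3*a^3 + (-178)*a^3*b + 3700/27*a^3*b^2 + 296/9*a^3*b^3 + (-64/3)*a^3*b^4 + 265/4*a^4 + (-620/3)*a^4*b + 634/3*a^4*b^2 + (-160/3)*a^4*b^3 + 4*a^4*b^4 + 66*a^5 + (-188)*a^5*b + 120*a^5*b^2 + (-16)*a^5*b^3 + 36*a^6 + (-48)*a^6*b + 16*a^6*b^2" by algebra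
  have h0: "b \<le> 14/25*a" using mono_bound[OF fa fb fm fw, of 0 1] by (simp add: eval_nat_numeral)
  have h1: "b^2 \<le> 9751/468750*a" using mono_bound[OF fa fb fm fw, of 0 2] by (simp add: eval_nat_numeral)
  have h2: "b^3 \<le> 13583143/17578125000*a" using mono_bound[OF fa fb fm fw, of 0 3] by (simp add: eval_nat_numeral)
  have h3: "0 \<le> b^4" using fa fb by simp
  have h4: "0 \<le> a" using fa fb by simp
  have h5: "0 \<le> a*b" using fa fb by simp
  have h6: "a*b^2 \<le> 1940449/1406250000*a" using mono_bound[OF fa fb fm fw, of 1 2] by (simp add: eval_nat_numeral)
  have h7: "a*b^3 \<le> 2703045457/52734375000000*a" using mono_bound[OF fa fb fm fw, of 1 3] by (simp add: eval_nat_numeral)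
  have h8: "0 \<le> a*b^4" using fa fb by simp
  have h9: "0 \<le> a^2" using fa fb by simp
  have h10: "0 \<le> a^2*b" using fa fb by simp
  have h11: "a^2*b^2 \<le> 386149351/4218750000000*a" using mono_bound[OF fa fb fm fw, of 2 2] by (simp add: eval_nat_numeral)
  have h12: "a^2*b^3 \<le> 537906045943/158203125000000000*a" using mono_bound[OF fa fb fm fw, of 2 3] by (simp add: eval_nat_numeral)
  have h13: "0 \<le> a^2*b^4" using fa fb by simp
  have h14: "a^3 \<le> 39601/9000000*a" using mono_bound[OF fa fb fm fw, of 3 0] by (simp add: eval_nat_numeral)
  have h15: "0 \<le> a^3*b" using fa fb by simp
  have h16: "a^3*b^2 \<le> 76843720849/12656250000000000*a" using mono_bound[OF fa fb fm fw, of 3 2] by (simp add: eval_nat_numeral)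
  have h17: "a^3*b^3 \<le> 107043303142657/474609375000000000000*a" using mono_bound[OF fa fb fm fw, of 3 3] by (simp add: eval_nat_numeral)
  have h18: "0 \<le> a^3*b^4" using fa fb by simp
  have h19: "a^4 \<le> 7880599/27000000000*a" using mono_bound[OF fa fb fm fw, of 4 0] by (simp add: eval_nat_numeral)
  have h20: "0 \<le> a^4*b" using fa fb by simp
  have h21: "a^4*b^2 \<le> 15291900448951/37968750000000000000*a" using mono_bound[OF fa fb fm fw, of 4 2] by (simp add: eval_nat_numeral)
  have h22: "0 \<le> a^4*b^3" using fa fb by simp
  have h23: "a^4*b^4 \<le> 29673152934266518999/53393554687500000000000000000*a" using mono_bound[OF fa fb fm fw, of 4 4] by (simp add: eval_nat_numeral)
  have h24: "a^5 \<le> 1568239201/81000000000000*a" using mono_bound[OF fa fb fm fw, of 5 0] by (simp add: eval_nat_numeral)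
  have h25: "0 \<le> a^5*b" using fa fb by simp
  have h26: "a^5*b^2 \<le> 3043088189341249/113906250000000000000000*a" using mono_bound[OF fa fb fm fw, of 5 2] by (simp add: eval_nat_numeral)
  have h27: "0 \<le> a^5*b^3" using fa fb by simp
  have h28: "a^6 \<le> 312079600999/243000000000000000*a" using mono_bound[OF fa fb fm fw, of 6 0] by (simp add: eval_nat_numeral)
  have h29: "0 \<le> a^6*b" using fa fb by simp
  have h30: "a^6*b^2 \<le> 605574549678908551/341718750000000000000000000*a" using mono_bound[OF fa fb fm fw, of 6 2] by (simp add: eval_nat_numeral)
  show ?thesis unfolding e using fa fw h0 h1 h2 h3 h4 h5 h6 h7 h8 h9 h10 h11 h12 h13 h14 h15 h16 h17 h18 h19 h20 h21 h22 h23 h24 h25 h26 h27 h28 h29 h30 by linarith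
qed

lemma cert_PB:
  fixes a b :: real
  assumes fa: "0 \<le> a" and fb: "0 \<le> b" and fm: "b \<le> 14/25*a" and fw: "a \<le> 199/3000"
  shows "(2*(2*(2*(a + 2/3) - 1 - (b + 1/2)*(a + 2/3))*((b + 1/2) + (a + 2/3)^2 - (a + 2/3)*(b + 1/2)) + (a + 2/3)^2*(b + 1/2)))^2 + 4*(b + 1/2)*((a + 2/3) + 2*(2*(a + 2/3) - 1 - (b + 1/2)*(a + 2/3)))*(((b + 1/2) + (a + 2/3)^2)*(2 - 3*(a + 2/3) + 2*(b + 1/2)*(a + 2/3)) + (b + 1/2)^2*(a + 2/3)*(5*(a + 2/3) - 2 - 2*(b + 1/2)*(a + 2/3)) - 4*(a + 2/3)^2*(b + 1/2)) \<le> 0"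
proof -
  have e: "(2*(2*(2*(a + 2/3) - 1 - (b + 1/2)*(a + 2/3))*((b + 1/2) + (a + 2/3)^2 - (a + 2/3)*(b + 1/2)) + (a + 2/3)^2*(b + 1/2)))^2 + 4*(b + 1/2)*((a + 2/3) + 2*(2*(a + 2/3) - 1 - (b + 1/2)*(a + 2/3)))*(((b + 1/2) + (a + 2/3)^2)*(2 - 3*(a + 2/3) + 2*(b + 1/2)*(a + 2/3)) + (b + 1/2)^2*(a + 2/3)*(5*(a + 2/3) - 2 - 2*(b + 1/2)*(a + 2/3)) - 4*(a + 2/3)^2*(b + 1/2)) = (-40/243)*b + 1264/729*b^2 + (-448/243)*b^3 + (-320/81)*b^4 + 128/27*b^5 + (-14/27)*a + (-68/9)*a*b + 640/27*a*b^2 + 32/81*a*b^3 + (-928/27)*a*b^4 + 64/3*a*b^5 + 11/3*a^2 + (-496/9)*a^2*b + 1936/27*a^2*b^2 + 248/27*a^2*b^3 + (-208/3)*a^2*b^4 + 32*a^2*b^5 + 116/3*a^3 + (-1060/9)*a^3*b + 3886/27*a^3*b^2 + (-452/9)*a^3*b^3 + (-88/3)*a^3*b^4 + 16*a^3*b^5 + 80*a^4 + (-168)*a^4*b + 204*a^4*b^2 + (-320/3)*a^4*b^3 + 16*a^4*b^4 + 72*a^5 + (-168)*a^5*b + 128*a^5*b^2 + (-32)*a^5*b^3 + 36*a^6 + (-48)*a^6*b + 16*a^6*b^2" by algebra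
  have h0: "0 \<le> b" using fa fb by simp
  have h1: "b^2 \<le> 9751/468750*a" using mono_bound[OF fa fb fm fw, of 0 2] by (simp add: eval_nat_numeral)
  have h2: "0 \<le> b^3" using fa fb by simp
  have h3: "0 \<le> b^4" using fa fb by simp
  have h4: "b^5 \<le> 26357396251207/24719238281250000000*a" using mono_bound[OF fa fb fm fw, of 0 5] by (simp add: eval_nat_numeral)
  have h5: "0 \<le> a" using fa fb by simp
  have h6: "0 \<le> a*b" using fa fb by simp
  have h7: "a*b^2 \<le> 1940449/1406250000*a" using mono_bound[OF fa fb fm fw, of 1 2] by (simp add: eval_nat_numeral)
  have h8: "a*b^3 \<le> 2703045457/52734375000000*a" using mono_bound[OF fa fb fm fw, of 1 3] by (simp add: eval_nat_numeral)
  have h9: "0 \<le> a*b^4" using fa fb by simp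
  have h10: "a*b^5 \<le> 5245121853990193/74157714843750000000000*a" using mono_bound[OF fa fb fm fw, of 1 5] by (simp add: eval_nat_numeral)
  have h11: "a^2 \<le> 199/3000*a" using mono_bound[OF fa fb fm fw, of 2 0] by (simp add: eval_nat_numeral)
  have h12: "0 \<le> a^2*b" using fa fb by simp
  have h13: "a^2*b^2 \<le> 386149351/4218750000000*a" using mono_bound[OF fa fb fm fw, of 2 2] by (simp add: eval_nat_numeral)
  have h14: "a^2*b^3 \<le> 537906045943/158203125000000000*a" using mono_bound[OF fa fb fm fw, of 2 3] by (simp add: eval_nat_numeral)
  have h15: "0 \<le> a^2*b^4" using fa fb by simp
  have h16: "a^2*b^5 \<le> 1043779248944048407/222473144531250000000000000*a" using mono_bound[OF fa fb fm fw, of 2 5] by (simp add: eval_nat_numeral)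
  have h17: "a^3 \<le> 39601/9000000*a" using mono_bound[OF fa fb fm fw, of 3 0] by (simp add: eval_nat_numeral)
  have h18: "0 \<le> a^3*b" using fa fb by simp
  have h19: "a^3*b^2 \<le> 76843720849/12656250000000000*a" using mono_bound[OF fa fb fm fw, of 3 2] by (simp add: eval_nat_numeral)
  have h20: "0 \<le> a^3*b^3" using fa fb by simp
  have h21: "0 \<le> a^3*b^4" using fa fb by simp
  have h22: "a^3*b^5 \<le> 207712070539865632993/667419433593750000000000000000*a" using mono_bound[OF fa fb fm fw, of 3 5] by (simp add: eval_nat_numeral)
  have h23: "a^4 \<le> 7880599/27000000000*a" using mono_bound[OF fa fb fm fw, of 4 0] by (simp add: eval_nat_numeral)
  have h24: "0 \<le> a^4*b" using fa fb by simp
  have h25: "a^4*b^2 \<le> 15291900448951/37968750000000000000*a" using mono_bound[OF fa fb fm fw, of 4 2] by (simp add: eval_nat_numeral)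
  have h26: "0 \<le> a^4*b^3" using fa fb by simp
  have h27: "a^4*b^4 \<le> 29673152934266518999/53393554687500000000000000000*a" using mono_bound[OF fa fb fm fw, of 4 4] by (simp add: eval_nat_numeral)
  have h28: "a^5 \<le> 1568239201/81000000000000*a" using mono_bound[OF fa fb fm fw, of 5 0] by (simp add: eval_nat_numeral)
  have h29: "0 \<le> a^5*b" using fa fb by simp
  have h30: "a^5*b^2 \<le> 3043088189341249/113906250000000000000000*a" using mono_bound[OF fa fb fm fw, of 5 2] by (simp add: eval_nat_numeral)
  have h31: "0 \<le> a^5*b^3" using fa fb by simp
  have h32: "a^6 \<le> 312079600999/243000000000000000*a" using mono_bound[OF fa fb fm fw, of 6 0] by (simp add: eval_nat_numeral)
  have h33: "0 \<le> a^6*b" using fa fb by simp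
  have h34: "a^6*b^2 \<le> 605574549678908551/341718750000000000000000000*a" using mono_bound[OF fa fb fm fw, of 6 2] by (simp add: eval_nat_numeral)
  show ?thesis unfolding e using fa fw h0 h1 h2 h3 h4 h5 h6 h7 h8 h9 h10 h11 h12 h13 h14 h15 h16 h17 h18 h19 h20 h21 h22 h23 h24 h25 h26 h27 h28 h29 h30 h31 h32 h33 h34 by linarith
qed

lemma cert_D:
  fixes a b :: real
  assumes fa: "0 \<le> a" and fb: "0 \<le> b" and fm: "b \<le> 14/25*a" and fw: "a \<le> 199/3000"
  shows "-(2*(a + 2/3) - 1 - (b + 1/2)*(a + 2/3)) \<le> 0"
proof -
  have e: "-(2*(a + 2/3) - 1 - (b + 1/2)*(a + 2/3)) = 2/3*b + (-3/2)*a + 1*a*b" by algebra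
  have h0: "b \<le> 14/25*a" using mono_bound[OF fa fb fm fw, of 0 1] by (simp add: eval_nat_numeral)
  have h1: "0 \<le> a" using fa fb by simp
  have h2: "a*b \<le> 1393/37500*a" using mono_bound[OF fa fb fm fw, of 1 1] by (simp add: eval_nat_numeral)
  show ?thesis unfolding e using fa fw h0 h1 h2 by linarith
qed

lemma cert_B2:
  fixes a b :: real
  assumes fa: "0 \<le> a" and fb: "0 \<le> b" and fm: "b \<le> 14/25*a" and fw: "a \<le> 199/3000"
  shows "4*(2*(a + 2/3) - 1 - (b + 1/2)*(a + 2/3)) - (b + 1/2) \<le> 0"
proof -
  have e: "4*(2*(a + 2/3) - 1 - (b + 1/2)*(a + 2/3)) - (b + 1/2) = (-1/2)*1 + (-11/3)*b + 6*a + (-4)*a*b" by algebra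
  have h1: "0 \<le> b" using fa fb by simp
  have h3: "0 \<le> a*b" using fa fb by simp
  show ?thesis unfolding e using fa fw h1 h3 by linarith
qed

lemma cert_H:
  fixes a b :: real
  assumes fa: "0 \<le> a" and fb: "0 \<le> b" and fm: "b \<le> 14/25*a" and fw: "a \<le> 199/3000"
  shows "(1/2 + 14/25*a) + (a + 2/3)^2*(1/2 + 14/25*a) + (a + 2/3)^2 + (1/2 + 14/25*a)^2*(a + 2/3) - 4*(a + 2/3)*(1/2 + 14/25*a) \<le> 0"
proof -
  have e: "(1/2 + 14/25*a) + (a + 2/3)^2*(1/2 + 14/25*a) + (a + 2/3)^2 + (1/2 + 14/25*a)^2*(a + 2/3) - 4*(a + 2/3)*(1/2 + 14/25*a) = (-11/180)*a + 2909/3750*a^2 + 546/625*a^3" by algebra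
  have h0: "0 \<le> a" using fa fb by simp
  have h1: "a^2 \<le> 199/3000*a" using mono_bound[OF fa fb fm fw, of 2 0] by (simp add: eval_nat_numeral)
  have h2: "a^3 \<le> 39601/9000000*a" using mono_bound[OF fa fb fm fw, of 3 0] by (simp add: eval_nat_numeral)
  show ?thesis unfolding e using fa fw h0 h1 h2 by linarith
qed


lemma cert_PA_wr:
  fixes w r :: real
  assumes "2/3 \<le> w" "1/2 \<le> r" "r - 1/2 \<le> 14/25*(w - 2/3)" "w \<le> 733/1000"
  shows "(2*(2*(2*w - 1 - r*w)*(r + w^2 - w*r) + (1 - r)*w^2*r))^2 + 4*r*(w + 2*(2*w - 1 - r*w))*((r + w^2)*(2 - 3*w + 2*r*w) + (2*r - 4)*w^2*r) \<le> 0"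
proof -
  define a where "a = w - 2/3"
  define b where "b = r - 1/2"
  have wa: "w = a + 2/3" and rb: "r = b + 1/2" by (simp_all add: a_def b_def)
  have "0 \<le> a" "0 \<le> b" "b \<le> 14/25*a" "a \<le> 199/3000" using assms by (simp_all add: a_def b_def)
  from cert_PA[OF this] show ?thesis unfolding wa rb .
qed

lemma cert_PB_wr:
  fixes w r :: real
  assumes "2/3 \<le> w" "1/2 \<le> r" "r - 1/2 \<le> 14/25*(w - 2/3)" "w \<le> 733/1000"
  shows "(2*(2*(2*w - 1 - r*w)*(r + w^2 - w*r) + w^2*r))^2 + 4*r*(w + 2*(2*w - 1 - r*w))*((r + w^2)*(2 - 3*w + 2*r*w) + r^2*w*(5*w - 2 - 2*r*w) - 4*w^2*r) \<le> 0"
proof -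
  define a where "a = w - 2/3"
  define b where "b = r - 1/2"
  have wa: "w = a + 2/3" and rb: "r = b + 1/2" by (simp_all add: a_def b_def)
  have "0 \<le> a" "0 \<le> b" "b \<le> 14/25*a" "a \<le> 199/3000" using assms by (simp_all add: a_def b_def)
  from cert_PB[OF this] show ?thesis unfolding wa rb .
qed

lemma cert_D_wr:
  fixes w r :: real
  assumes "2/3 \<le> w" "1/2 \<le> r" "r - 1/2 \<le> 14/25*(w - 2/3)" "w \<le> 733/1000"
  shows "-(2*w - 1 - r*w) \<le> 0"
proof -
  define a where "a = w - 2/3"
  define b where "b = r - 1/2"
  have wa: "w = a + 2/3" and rb: "r = b + 1/2" by (simp_all add: a_def b_def)
  have "0 \<le> a" "0 \<le> b" "b \<le> 14/25*a" "a \<le> 199/3000" using assms by (simp_all add: a_def b_def)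
  from cert_D[OF this] show ?thesis unfolding wa rb .
qed

lemma cert_B2_wr:
  fixes w r :: real
  assumes "2/3 \<le> w" "1/2 \<le> r" "r - 1/2 \<le> 14/25*(w - 2/3)" "w \<le> 733/1000"
  shows "4*(2*w - 1 - r*w) - r \<le> 0"
proof -
  define a where "a = w - 2/3"
  define b where "b = r - 1/2"
  have wa: "w = a + 2/3" and rb: "r = b + 1/2" by (simp_all add: a_def b_def)
  have "0 \<le> a" "0 \<le> b" "b \<le> 14/25*a" "a \<le> 199/3000" using assms by (simp_all add: a_def b_def)
  from cert_B2[OF this] show ?thesis unfolding wa rb .
qed

lemma cert_H_w:
  fixes w :: real
  assumes "2/3 \<le> w" "w \<le> 733/1000"
  shows "(1/2 + 14/25*(w - 2/3)) + w^2*(1/2 + 14/25*(w - 2/3)) + w^2 + (1/2 + 14/25*(w - 2/3))^2*w - 4*w*(1/2 + 14/25*(w - 2/3)) \<le> 0"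
proof -
  define a where "a = w - 2/3"
  have wa: "w = a + 2/3" by (simp add: a_def)
  have "0 \<le> a" "0 \<le> (0::real)" "0 \<le> 14/25*a" "a \<le> 199/3000" using assms by (simp_all add: a_def)
  from cert_H[OF this] have "(1/2 + 14/25*a) + (a + 2/3)^2*(1/2 + 14/25*a) + (a + 2/3)^2 + (1/2 + 14/25*a)^2*(a + 2/3) - 4*(a + 2/3)*(1/2 + 14/25*a) \<le> 0" .
  moreover have "w - 2/3 = a" by (simp add: a_def)
  ultimately show ?thesis unfolding wa by simp
qed


lemma wpos2:
  fixes uu vv A B :: real
  assumes "0 \<le> uu" "0 \<le> vv" "0 < uu + vv" "0 < A" "0 < B"
  shows "0 < uu*A + vv*B"
proof (cases "uu > 0")
  case True
  then have "0 < uu*A" using assms by simp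
  moreover have "0 \<le> vv*B" using assms by simp
  ultimately show ?thesis by linarith
next
  case False
  then have "vv > 0" using assms by linarith
  then have "0 < vv*B" using assms by simp
  moreover have "0 \<le> uu*A" using assms by simp
  ultimately show ?thesis by linarith
qed

lemma wpos3:
  fixes uu vv tt A B C :: real
  assumes "0 \<le> uu" "0 \<le> vv" "0 \<le> tt" "0 < uu + vv + tt" "0 < A" "0 < B" "0 < C"
  shows "0 < uu*A + vv*B + tt*C"
proof (cases "tt > 0")
  case True
  then have "0 < tt*C" using assms by simp
  moreover have "0 \<le> uu*A" "0 \<le> vv*B" using assms by simp_all
  ultimately show ?thesis by linarith
next
  case False
  then have "0 < uu*A + vv*B" using assms wpos2[of uu vv A B] by linarith
  moreover have "0 \<le> tt*C" using assms by simp
  ultimately show ?thesis by linarith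
qed

lemma sq01: fixes y :: real assumes "0 \<le> y" "y \<le> 1" shows "y^2 + (1-y)^2 \<le> 1"
proof -
  have "y^2 + (1-y)^2 = 1 - 2*y*(1-y)" by (simp add: power2_eq_square algebra_simps)
  moreover have "0 \<le> y*(1-y)" using assms by simp
  ultimately show ?thesis by linarith
qed

lemma case1:
  fixes al be ga x y z :: real
  assumes b12: "1/2 \<le> be" and g12: "1/2 \<le> ga" and prod: "al*be*ga = 1" and al2: "2 \<le> al"
    and x: "0 \<le> x" "x \<le> 1" and y: "0 \<le> y" "y \<le> 1" and z: "0 \<le> z" "z \<le> 1"
    and f1: "al*x^2 + be*(1-y)^2 + ga > 2" and f3: "al*(1-x)^2 + be + ga*(1-z)^2 > 2"
  shows False
proof -
  have pos: "0 < (1-x)*(al*x^2 + be*(1-y)^2 + ga - 2) + x*(al*(1-x)^2 + be + ga*(1-z)^2 - 2)"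
    using wpos2[of "1-x" x] x f1 f3 by simp
  have y2: "(1-y)^2 \<le> 1" using y by (simp add: power_le_one)
  have z2: "(1-z)^2 \<le> 1" using z by (simp add: power_le_one)
  have e1: "(1-x)*be*(1-y)^2 \<le> (1-x)*be" using y2 x b12 by (simp add: mult_left_le)
  have e2: "x*ga*(1-z)^2 \<le> x*ga" using z2 x g12 by (simp add: mult_left_le)
  have xx: "x*(1-x) \<le> 1/4" proof - have "0 \<le> (x - 1/2)^2" by simp thus ?thesis by (simp add: power2_eq_square algebra_simps) qed
  have e3: "al*(x*(1-x)) \<le> al*(1/4)" using xx al2 by (intro mult_left_mono) auto
  have exp: "(1-x)*(al*x^2 + be*(1-y)^2 + ga - 2) + x*(al*(1-x)^2 + be + ga*(1-z)^2 - 2)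
     = al*(x*(1-x)) + (1-x)*be*(1-y)^2 + (1-x)*ga + x*be + x*ga*(1-z)^2 - 2"
    by (simp add: power2_eq_square algebra_simps)
  have bg: "be*ga \<ge> 1/4" using mult_mono[OF b12 g12] b12 g12 by simp
  have al4: "al \<le> 4"
  proof -
    have "al*(be*ga) = 1" using prod by (simp add: mult.assoc)
    moreover have "al*(1/4) \<le> al*(be*ga)" using bg al2 by (intro mult_left_mono) auto
    ultimately show ?thesis by simp
  qed
  have bgs: "be + ga \<le> 2*(be*ga) + 1/2"
  proof - have "0 \<le> (2*be - 1)*(2*ga - 1)" using b12 g12 by simp
    thus ?thesis by (simp add: algebra_simps) qed
  have key: "al/4 + be + ga \<le> 2"
  proof -
    have "al*(al/4 + be + ga) \<le> al*(al/4 + 2*(be*ga) + 1/2)" using bgs al2 by (simp add: mult_left_mono)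
    also have "\<dots> = al^2/4 + 2*(al*be*ga) + al/2" by (simp add: power2_eq_square algebra_simps)
    also have "\<dots> = al^2/4 + 2 + al/2" using prod by simp
    also have "\<dots> \<le> al*2" proof -
      have "(al - 2)*(4 - al) \<ge> 0" using al2 al4 by simp
      thus ?thesis by (simp add: power2_eq_square algebra_simps) qed
    finally have "al*(al/4 + be + ga) \<le> al*2" .
    thus ?thesis using al2 by simp
  qed
  have "(1-x)*be + x*be = be" "(1-x)*ga + x*ga = ga" by (simp_all add: algebra_simps)
  then show False using pos exp e1 e2 e3 key by linarith
qed


lemma case2:
  fixes al be ga x y z :: real
  assumes b12: "1/2 \<le> be" and g12: "1/2 \<le> ga" and alp: "0 < al"
    and Gle: "al^2 + 1 + al*be + al*ga - 4*al \<le> 0"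
    and x: "0 \<le> x" "x \<le> 1" and y: "0 \<le> y" "y \<le> 1" and z: "0 \<le> z" "z \<le> 1"
    and f1: "al*x^2 + be*(1-y)^2 + ga > 2" and f2: "al + be*y^2 + ga*z^2 > 2"
    and f3: "al*(1-x)^2 + be + ga*(1-z)^2 > 2"
  shows False
proof (cases "x \<le> 1/2")
  case True
  have pos: "0 < (1-x)*(al*x^2 + be*(1-y)^2 + ga - 2) + x*(al + be*y^2 + ga*z^2 - 2) + x*(al*(1-x)^2 + be + ga*(1-z)^2 - 2)"
    using wpos3[of "1-x" x x] x f1 f2 f3 by simp
  have exp: "(1-x)*(al*x^2 + be*(1-y)^2 + ga - 2) + x*(al + be*y^2 + ga*z^2 - 2) + x*(al*(1-x)^2 + be + ga*(1-z)^2 - 2)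
     = al*x*(2-x) + be*((1-x)*(1-y)^2 + x*y^2) + x*be + (1-x)*ga + ga*(x*(z^2 + (1-z)^2)) - 2*(1+x)"
    by (simp add: power2_eq_square algebra_simps)
  have "x*y^2 \<le> (1-x)*y^2" using True by (intro mult_right_mono) auto
  hence "(1-x)*(1-y)^2 + x*y^2 \<le> (1-x)*((1-y)^2 + y^2)" by (simp add: algebra_simps)
  also have "\<dots> \<le> (1-x)*1" using sq01[OF y] x by (intro mult_left_mono) (auto simp: add.commute)
  finally have by1: "be*((1-x)*(1-y)^2 + x*y^2) \<le> be*(1-x)" using b12 by (intro mult_left_mono) auto
  have "x*(z^2 + (1-z)^2) \<le> x*1" using sq01[OF z] x by (intro mult_left_mono) auto
  hence bz: "ga*(x*(z^2 + (1-z)^2)) \<le> ga*x" using g12 by (intro mult_left_mono) auto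
  have idk: "al*(2 + 2*x - (al*x*(2-x) + be + ga)) = (al*x - al + 1)^2 - (al^2 + 1 + al*be + al*ga - 4*al)"
    by (simp add: power2_eq_square algebra_simps)
  have "0 \<le> al*(2 + 2*x - (al*x*(2-x) + be + ga))" unfolding idk using Gle zero_le_power2[of "al*x - al + 1"] by linarith
  hence key: "al*x*(2-x) + be + ga \<le> 2 + 2*x" using alp by (simp add: zero_le_mult_iff)
  have e4: "al*x*(2-x) + be*(1-x) + x*be + (1-x)*ga + ga*x - 2*(1+x) = al*x*(2-x) + be + ga - 2 - 2*x" by (simp add: algebra_simps)
  show False using pos exp by1 bz key e4 by linarith
next
  case False
  have pos: "0 < (1-x)*(al*x^2 + be*(1-y)^2 + ga - 2) + (1-x)*(al + be*y^2 + ga*z^2 - 2) + x*(al*(1-x)^2 + be + ga*(1-z)^2 - 2)"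
    using wpos3[of "1-x" "1-x" x] x f1 f2 f3 by simp
  have exp: "(1-x)*(al*x^2 + be*(1-y)^2 + ga - 2) + (1-x)*(al + be*y^2 + ga*z^2 - 2) + x*(al*(1-x)^2 + be + ga*(1-z)^2 - 2)
     = al*(1-x)*(2-(1-x)) + be*((1-x)*((1-y)^2 + y^2)) + x*be + (1-x)*ga + ga*((1-x)*z^2 + x*(1-z)^2) - 2*(2-x)"
    by (simp add: power2_eq_square algebra_simps)
  have "(1-x)*((1-y)^2 + y^2) \<le> (1-x)*1" using sq01[OF y] x by (intro mult_left_mono) (auto simp: add.commute)
  hence by1: "be*((1-x)*((1-y)^2 + y^2)) \<le> be*(1-x)" using b12 by (intro mult_left_mono) auto
  have "(1-x)*z^2 \<le> x*z^2" using False by (intro mult_right_mono) auto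
  hence "(1-x)*z^2 + x*(1-z)^2 \<le> x*(z^2 + (1-z)^2)" by (simp add: algebra_simps)
  also have "\<dots> \<le> x*1" using sq01[OF z] x by (intro mult_left_mono) auto
  finally have bz: "ga*((1-x)*z^2 + x*(1-z)^2) \<le> ga*x" using g12 by (intro mult_left_mono) auto
  have idk: "al*(2 + 2*(1-x) - (al*(1-x)*(2-(1-x)) + be + ga)) = (al*(1-x) - al + 1)^2 - (al^2 + 1 + al*be + al*ga - 4*al)"
    by (simp add: power2_eq_square algebra_simps)
  have "0 \<le> al*(2 + 2*(1-x) - (al*(1-x)*(2-(1-x)) + be + ga))" unfolding idk using Gle zero_le_power2[of "al*(1-x) - al + 1"] by linarith
  hence key: "al*(1-x)*(2-(1-x)) + be + ga \<le> 2 + 2*(1-x)" using alp by (simp add: zero_le_mult_iff)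
  have e4: "al*(1-x)*(2-(1-x)) + be*(1-x) + x*be + (1-x)*ga + ga*x - 2*(2-x) = al*(1-x)*(2-(1-x)) + be + ga - 2 - 2*(1-x)" by (simp add: algebra_simps)
  show False using pos exp by1 bz key e4 by linarith
qed


lemma idA: fixes w ga :: real assumes "0 < w" "0 < ga"
  shows "w^2*((1/w)*(1 + 2*(2 - 1/w - ga))) = w + 2*(2*w - 1 - ga*w)"
  using assms by (simp add: field_simps power2_eq_square)
lemma idB: fixes w ga :: real assumes "0 < w" "0 < ga"
  shows "w^2*ga*(2*(2*(2 - 1/w - ga)*(1/w + w/ga - 1) + 1 - ga)) = 2*(2*(2*w - 1 - ga*w)*(ga + w^2 - w*ga) + (1 - ga)*w^2*ga)"
  using assms by (simp add: field_simps power2_eq_square)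
lemma idC: fixes w ga :: real assumes "0 < w" "0 < ga"
  shows "w^2*ga*((1/w + w/ga)*(1 - 2*(2 - 1/w - ga)) + 2*ga - 4) = (ga + w^2)*(2 - 3*w + 2*ga*w) + (2*ga - 4)*w^2*ga"
  using assms by (simp add: field_simps power2_eq_square)
lemma idB': fixes w ga :: real assumes "0 < w" "0 < ga"
  shows "w^2*ga*(2*(2*(2 - 1/w - ga)*(1/w + w/ga - 1) + 1)) = 2*(2*(2*w - 1 - ga*w)*(ga + w^2 - w*ga) + w^2*ga)"
  using assms by (simp add: field_simps power2_eq_square)
lemma idC': fixes w ga :: real assumes "0 < w" "0 < ga"
  shows "w^2*ga*((1/w + w/ga)*(1 - 2*(2 - 1/w - ga)) + ga*(1 + 2*(2 - 1/w - ga)) - 4) = (ga + w^2)*(2 - 3*w + 2*ga*w) + ga^2*w*(5*w - 2 - 2*ga*w) - 4*w^2*ga"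
  using assms by (simp add: field_simps power2_eq_square)


lemma case3:
  fixes al be ga x y z :: real
  assumes ord1: "be \<le> al" and ord2: "ga \<le> be" and g12: "1/2 \<le> ga" and prod: "al*be*ga = 1"
    and lt2: "al < 2" and Gpos: "al^2 + 1 + al*be + al*ga - 4*al > 0"
    and x: "0 \<le> x" "x \<le> 1" and y: "0 \<le> y" "y \<le> 1" and z: "0 \<le> z" "z \<le> 1"
    and f1: "al*x^2 + be*(1-y)^2 + ga > 2" and f2: "al + be*y^2 + ga*z^2 > 2"
    and f3: "al*(1-x)^2 + be + ga*(1-z)^2 > 2"
  shows False
proof -
  have gapos: "0 < ga" using g12 by simp
  have bepos: "0 < be" using ord2 gapos by simp
  have alpos: "0 < al" using ord1 bepos by simp
  define w where "w = 1/al"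
  have wal: "w*al = 1" using alpos by (simp add: w_def)
  have wpos: "0 < w" using alpos by (simp add: w_def)
  have bega: "be*ga = w"
  proof -
    have "al*(be*ga) = 1" using prod by (simp add: mult.assoc)
    thus ?thesis using alpos by (simp add: w_def field_simps)
  qed
  have al1: "1 \<le> al"
  proof (rule ccontr)
    assume "\<not> 1 \<le> al"
    hence "be < 1" "ga < 1" using ord1 ord2 by auto
    hence "be*ga < 1*1" using gapos bepos by (intro mult_strict_mono) auto
    hence "al*(be*ga) < 1*1" using \<open>\<not> 1 \<le> al\<close> alpos bepos gapos
      by (intro mult_strict_mono) auto
    thus False using prod by (simp add: mult.assoc)
  qed
  have w1: "w \<le> 1" using al1 by (simp add: w_def)
  have w12: "1/2 < w" using lt2 alpos by (simp add: w_def field_simps)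
  have ga1: "ga \<le> 1"
  proof (rule ccontr)
    assume "\<not> ga \<le> 1"
    hence "1 < be" "1 < al" using ord1 ord2 by auto
    hence "1*1 < al*be" by (intro mult_strict_mono) auto
    hence "1*1 < (al*be)*ga" using \<open>\<not> ga \<le> 1\<close> by (intro mult_strict_mono) auto
    thus False using prod by simp
  qed
  have gw2: "ga^2 \<le> w"
  proof -
    have "ga*ga \<le> be*ga" using ord2 gapos by (intro mult_right_mono) auto
    thus ?thesis using bega by (simp add: power2_eq_square)
  qed
  have w2g: "w^2 \<le> ga"
  proof -
    have "w*be \<le> w*al" using ord1 wpos by (intro mult_left_mono) auto
    hence "(w*be)*ga \<le> 1*ga" using wal gapos by (intro mult_right_mono) auto
    thus ?thesis using bega by (simp add: power2_eq_square mult.assoc)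
  qed
  define Gw where "Gw = ga + w^2*ga + w^2 + w*ga^2 - 4*w*ga"
  have GwG: "Gw = w^2*ga*(al^2 + 1 + al*be + al*ga - 4*al)"
  proof -
    have "w^2*ga*(al^2 + 1 + al*be + al*ga - 4*al) = ga*(w*al)^2 + w^2*ga + w*(w*al)*(be*ga) + w*(w*al)*ga^2 - 4*(w*al)*w*ga"
      by (simp add: power2_eq_square algebra_simps)
    also have "\<dots> = Gw" using wal bega by (simp add: Gw_def power2_eq_square)
    finally show ?thesis by simp
  qed
  have Gwpos: "0 < Gw" unfolding GwG using Gpos wpos gapos by simp
  have wlo: "2/3 \<le> w"
  proof (rule ccontr)
    assume "\<not> 2/3 \<le> w"
    have id: "Gw = -(w*(2*ga-1)*(2*w - ga))/2 - 3*(ga*(w - 1/2)*(2/3 - w))"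
      unfolding Gw_def by algebra
    have "0 \<le> w*(2*ga-1)*(2*w - ga)" using wpos g12 ga1 w12 by simp
    moreover have "0 \<le> ga*(w - 1/2)*(2/3 - w)" using gapos w12 \<open>\<not> 2/3 \<le> w\<close> by simp
    ultimately have "Gw \<le> 0" unfolding id by linarith
    thus False using Gwpos by simp
  qed
  have whi: "w \<le> 733/1000"
  proof (rule ccontr)
    assume A: "\<not> w \<le> 733/1000"
    have id: "Gw = -((ga - w^2)*(1 - ga*w)) - ga*(1 - w)*(w^2 + 2*w - 2)"
      unfolding Gw_def by algebra
    have "ga*w \<le> 1*1" using ga1 w1 gapos wpos by (intro mult_mono) auto
    hence "0 \<le> (ga - w^2)*(1 - ga*w)" using w2g by simp
    moreover have "(733/1000)*(733/1000) \<le> w*w" using A by (intro mult_mono) auto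
    hence "0 \<le> w^2 + 2*w - 2" using A by (simp add: power2_eq_square)
    hence "0 \<le> ga*(1 - w)*(w^2 + 2*w - 2)" using gapos w1 by simp
    ultimately have "Gw \<le> 0" unfolding id by linarith
    thus False using Gwpos by simp
  qed
  define rL where "rL = 1/2 + 14/25*(w - 2/3)"
  have rL12: "1/2 \<le> rL" using wlo by (simp add: rL_def)
  have ghi: "ga \<le> rL"
  proof (rule ccontr)
    assume A: "\<not> ga \<le> rL"
    have H: "rL + w^2*rL + w^2 + rL^2*w - 4*w*rL \<le> 0" using cert_H_w[OF wlo whi] by (simp add: rL_def)
    have id: "rL*Gw = w*(ga - rL)*(ga*rL - w) + ga*(rL + w^2*rL + w^2 + rL^2*w - 4*w*rL)"
      unfolding Gw_def by algebra
    have "ga*rL \<le> ga*ga" using A gapos by (intro mult_left_mono) auto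
    hence "ga*rL - w \<le> 0" using gw2 by (simp add: power2_eq_square)
    hence "w*(ga - rL)*(ga*rL - w) \<le> 0" using A wpos by (simp add: mult_nonneg_nonpos)
    moreover have "ga*(rL + w^2*rL + w^2 + rL^2*w - 4*w*rL) \<le> 0" using H gapos by (simp add: mult_nonneg_nonpos)
    ultimately have "rL*Gw \<le> 0" unfolding id by linarith
    moreover have "0 < rL*Gw" using rL12 Gwpos by simp
    ultimately show False by simp
  qed
  have box: "2/3 \<le> w" "1/2 \<le> ga" "ga - 1/2 \<le> 14/25*(w - 2/3)" "w \<le> 733/1000"
    using wlo g12 ghi whi unfolding rL_def by linarith+
  have cD: "-(2*w - 1 - ga*w) \<le> 0" using cert_D_wr[OF box] .
  have cB2: "4*(2*w - 1 - ga*w) - ga \<le> 0" using cert_B2_wr[OF box] .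
  define k where "k = 2*w - 1 - ga*w"
  define d where "d = 2 - al - ga"
  have dk: "d*w = k" using wal by (simp add: d_def k_def algebra_simps)
  have k0: "0 \<le> k" using cD by (simp add: k_def)
  have d0: "0 \<le> d" using dk k0 wpos by (metis zero_le_mult_iff not_less order_less_imp_le)
  define hh where "hh = 2*d"
  have s0: "0 \<le> hh" using d0 by (simp add: hh_def)
  have bd: "4*be*d \<le> 1"
  proof -
    have "(4*be*d)*(ga*w) = 4*(be*ga)*(d*w)" by (simp add: algebra_simps)
    also have "\<dots> = 4*w*k" using bega dk by simp
    also have "\<dots> \<le> ga*w"
    proof -
      have "4*k \<le> ga" using cB2 by (simp add: k_def)
      hence "(4*k)*w \<le> ga*w" using wpos by (intro mult_right_mono) auto
      thus ?thesis by (simp add: mult_ac)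
    qed
    finally have "(4*be*d)*(ga*w) \<le> 1*(ga*w)" by simp
    thus ?thesis using gapos wpos by (simp add: mult_le_cancel_right)
  qed
  have bes: "be*hh^2 \<le> d"
  proof -
    have "be*hh^2 = (4*be*d)*d" by (simp add: hh_def power2_eq_square)
    also have "\<dots> \<le> 1*d" using bd d0 by (intro mult_right_mono) auto
    finally show ?thesis by simp
  qed
  have ys: "hh < y"
  proof -
    have "ga*z^2 \<le> ga*1" using z gapos by (intro mult_left_mono) (auto simp: power_le_one)
    hence "be*y^2 > d" using f2 by (simp add: d_def)
    hence "be*hh^2 < be*y^2" using bes by simp
    hence "hh^2 < y^2" using bepos by simp
    thus ?thesis using y by (metis power_less_imp_less_base)
  qed
  have s1: "hh \<le> 1" using ys y by simp
  define P where "P = (1-x)*(1-hh)"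
  define Q where "Q = x*(1+hh)"
  have P0: "0 \<le> P" using x s1 by (simp add: P_def)
  have Q0: "0 \<le> Q" using x s0 by (simp add: Q_def)
  have pos: "0 < ((1-x)*(1+hh))*(al*x^2 + be*(1-y)^2 + ga - 2) + ((1-x)*(1-hh))*(al + be*y^2 + ga*z^2 - 2) + (x*(1+hh))*(al*(1-x)^2 + be + ga*(1-z)^2 - 2)"
  proof (rule wpos3)
    show "0 \<le> (1-x)*(1+hh)" "0 \<le> (1-x)*(1-hh)" "0 \<le> x*(1+hh)" using x s0 s1 by simp_all
    have "0 < 2*(1-x) + x*(1+hh)" using x s0 by (cases "x = 1") (auto simp: add_pos_nonneg)
    thus "0 < (1-x)*(1+hh) + (1-x)*(1-hh) + x*(1+hh)" by (simp add: algebra_simps)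
  qed (use f1 f2 f3 in simp_all)
  have exp: "((1-x)*(1+hh))*(al*x^2 + be*(1-y)^2 + ga - 2) + ((1-x)*(1-hh))*(al + be*y^2 + ga*z^2 - 2) + (x*(1+hh))*(al*(1-x)^2 + be + ga*(1-z)^2 - 2)
    = al*(1+hh)*x*(1-x) + al*(1-x)*(1-hh) + (1-x)*(1+hh)*ga + x*(1+hh)*be
      + be*(1-x)*((1+hh)*(1-y)^2 + (1-hh)*y^2) + ga*(P*z^2 + Q*(1-z)^2) - 2*(2 - x + x*hh)"
    by (simp add: P_def Q_def power2_eq_square algebra_simps)
  have yb: "be*(1-x)*((1+hh)*(1-y)^2 + (1-hh)*y^2) \<le> be*(1-x)*(1-hh)"
  proof -
    have "(1+hh)*(1-y)^2 + (1-hh)*y^2 = (1-hh) + 2*((y-hh)*(y-1))" by algebra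
    moreover have "(y-hh)*(y-1) \<le> 0" using ys y by (simp add: mult_nonneg_nonpos)
    ultimately have "(1+hh)*(1-y)^2 + (1-hh)*y^2 \<le> 1-hh" by linarith
    thus ?thesis using bepos x by (intro mult_left_mono) auto
  qed
  have zb: "P*z^2 + Q*(1-z)^2 \<le> max P Q"
  proof -
    have "P*z^2 \<le> max P Q * z^2" "Q*(1-z)^2 \<le> max P Q * (1-z)^2" by (simp_all add: mult_right_mono)
    hence "P*z^2 + Q*(1-z)^2 \<le> max P Q * (z^2 + (1-z)^2)" by (simp add: algebra_simps)
    also have "\<dots> \<le> max P Q * 1" using sq01[OF z] P0 by (intro mult_left_mono) auto
    finally show ?thesis by simp
  qed
  have zb2: "ga*(P*z^2 + Q*(1-z)^2) \<le> ga*max P Q" using zb gapos by (intro mult_left_mono) auto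
  define A where "A = al*(1+hh)"
  have Apos: "0 < A" using alpos s0 by (simp add: A_def)
  have al_w: "al = 1/w" using wal wpos by (simp add: field_simps)
  have be_w: "be = w/ga" using bega gapos by (simp add: field_simps)
  have s_w: "hh = 2*(2 - 1/w - ga)" by (simp add: hh_def d_def al_w)
  show False
  proof (cases "Q \<le> P")
    case True
    define B where "B = 2*(hh*(al+be-1) + 1 - ga)"
    define C where "C = (al+be)*(1-hh) + 2*ga - 4"
    have KA: "al*(1+hh)*x*(1-x) + al*(1-x)*(1-hh) + (1-x)*(1+hh)*ga + x*(1+hh)*be + be*(1-x)*(1-hh) + ga*P - 2*(2 - x + x*hh)
       = -A*x^2 + B*x + C" by (simp add: A_def B_def C_def P_def power2_eq_square algebra_simps)
    have sq: "4*A*(-A*x^2 + B*x + C) = (B^2 + 4*A*C) - (2*A*x - B)^2" by (simp add: power2_eq_square algebra_simps)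
    have cPA: "(2*(2*(2*w - 1 - ga*w)*(ga + w^2 - w*ga) + (1 - ga)*w^2*ga))^2 + 4*ga*(w + 2*(2*w - 1 - ga*w))*((ga + w^2)*(2 - 3*w + 2*ga*w) + (2*ga - 4)*w^2*ga) \<le> 0"
      using cert_PA_wr[OF box] .
    have eA: "w^2*A = w + 2*(2*w - 1 - ga*w)" unfolding A_def al_w s_w using idA[OF wpos gapos] .
    have eB: "w^2*ga*B = 2*(2*(2*w - 1 - ga*w)*(ga + w^2 - w*ga) + (1 - ga)*w^2*ga)" unfolding B_def al_w be_w s_w using idB[OF wpos gapos] .
    have eC: "w^2*ga*C = (ga + w^2)*(2 - 3*w + 2*ga*w) + (2*ga - 4)*w^2*ga" unfolding C_def al_w be_w s_w using idC[OF wpos gapos] .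
    have comb: "w^4*ga^2*(B^2 + 4*A*C) = (w^2*ga*B)^2 + 4*ga*(w^2*A)*(w^2*ga*C)" by algebra
    have "w^4*ga^2*(B^2 + 4*A*C) \<le> 0" unfolding comb eA eB eC using cPA .
    hence "B^2 + 4*A*C \<le> 0" using wpos gapos by (simp add: mult_le_0_iff)
    hence "4*A*(-A*x^2 + B*x + C) \<le> 0" unfolding sq using zero_le_power2[of "2*A*x - B"] by linarith
    hence "-A*x^2 + B*x + C \<le> 0" using Apos by (simp add: mult_le_0_iff)
    moreover have "ga*(P*z^2 + Q*(1-z)^2) \<le> ga*P" using zb2 True by simp
    ultimately show False using pos exp yb KA by linarith
  next
    case False
    define B where "B = 2*(hh*(al+be-1) + 1)"
    define C where "C = (al+be)*(1-hh) + ga*(1+hh) - 4"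
    have KB: "al*(1+hh)*x*(1-x) + al*(1-x)*(1-hh) + (1-x)*(1+hh)*ga + x*(1+hh)*be + be*(1-x)*(1-hh) + ga*Q - 2*(2 - x + x*hh)
       = -A*x^2 + B*x + C" by (simp add: A_def B_def C_def Q_def power2_eq_square algebra_simps)
    have sq: "4*A*(-A*x^2 + B*x + C) = (B^2 + 4*A*C) - (2*A*x - B)^2" by (simp add: power2_eq_square algebra_simps)
    have cPB: "(2*(2*(2*w - 1 - ga*w)*(ga + w^2 - w*ga) + w^2*ga))^2 + 4*ga*(w + 2*(2*w - 1 - ga*w))*((ga + w^2)*(2 - 3*w + 2*ga*w) + ga^2*w*(5*w - 2 - 2*ga*w) - 4*w^2*ga) \<le> 0"
      using cert_PB_wr[OF box] .
    have eA: "w^2*A = w + 2*(2*w - 1 - ga*w)" unfolding A_def al_w s_w using idA[OF wpos gapos] .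
    have eB: "w^2*ga*B = 2*(2*(2*w - 1 - ga*w)*(ga + w^2 - w*ga) + w^2*ga)" unfolding B_def al_w be_w s_w using idB'[OF wpos gapos] .
    have eC: "w^2*ga*C = (ga + w^2)*(2 - 3*w + 2*ga*w) + ga^2*w*(5*w - 2 - 2*ga*w) - 4*w^2*ga" unfolding C_def al_w be_w s_w using idC'[OF wpos gapos] .
    have comb: "w^4*ga^2*(B^2 + 4*A*C) = (w^2*ga*B)^2 + 4*ga*(w^2*A)*(w^2*ga*C)" by algebra
    have "w^4*ga^2*(B^2 + 4*A*C) \<le> 0" unfolding comb eA eB eC using cPB .
    hence "B^2 + 4*A*C \<le> 0" using wpos gapos by (simp add: mult_le_0_iff)
    hence "4*A*(-A*x^2 + B*x + C) \<le> 0" unfolding sq using zero_le_power2[of "2*A*x - B"] by linarith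
    hence "-A*x^2 + B*x + C \<le> 0" using Apos by (simp add: mult_le_0_iff)
    moreover have "ga*(P*z^2 + Q*(1-z)^2) \<le> ga*Q" using zb2 False by simp
    ultimately show False using pos exp yb KB by linarith
  qed
qed


lemma core_ordered:
  fixes al be ga x y z :: real
  assumes ord1: "be \<le> al" and ord2: "ga \<le> be" and g12: "1/2 \<le> ga" and prod: "al*be*ga = 1"
    and x: "0 \<le> x" "x \<le> 1" and y: "0 \<le> y" "y \<le> 1" and z: "0 \<le> z" "z \<le> 1"
  shows "al*x^2 + be*(1-y)^2 + ga \<le> 2 \<or> al + be*y^2 + ga*z^2 \<le> 2 \<or> al*(1-x)^2 + be + ga*(1-z)^2 \<le> 2"
proof (rule ccontr)
  assume "\<not> ?thesis"
  hence f1: "al*x^2 + be*(1-y)^2 + ga > 2" and f2: "al + be*y^2 + ga*z^2 > 2"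
    and f3: "al*(1-x)^2 + be + ga*(1-z)^2 > 2" by auto
  have b12: "1/2 \<le> be" using ord2 g12 by simp
  have alp: "0 < al" using ord1 b12 by simp
  show False
  proof (cases "2 \<le> al")
    case True
    show False by (rule case1[OF b12 g12 prod True x y z f1 f3])
  next
    case False
    hence lt2: "al < 2" by simp
    show False
    proof (cases "al^2 + 1 + al*be + al*ga - 4*al \<le> 0")
      case True
      show False by (rule case2[OF b12 g12 alp True x y z f1 f2 f3])
    next
      case False
      hence Gp: "al^2 + 1 + al*be + al*ga - 4*al > 0" by simp
      show False by (rule case3[OF ord1 ord2 g12 prod lt2 Gp x y z f1 f2 f3])
    qed
  qed
qed

lemma core_general:
  fixes al be ga x y z :: real
  assumes a12: "1/2 \<le> al" and b12: "1/2 \<le> be" and g12: "1/2 \<le> ga" and prod: "al*be*ga = 1"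
    and x: "0 \<le> x" "x \<le> 1" and y: "0 \<le> y" "y \<le> 1" and z: "0 \<le> z" "z \<le> 1"
  shows "al*x^2 + be*(1-y)^2 + ga \<le> 2 \<or> al + be*y^2 + ga*z^2 \<le> 2 \<or> al*(1-x)^2 + be + ga*(1-z)^2 \<le> 2"
proof -
  have x': "0 \<le> 1-x" "1-x \<le> 1" and y': "0 \<le> 1-y" "1-y \<le> 1" and z': "0 \<le> 1-z" "1-z \<le> 1" using x y z by auto
  consider "be \<le> al" "ga \<le> be" | "ga \<le> al" "be \<le> ga" | "al \<le> be" "ga \<le> al"
    | "al \<le> ga" "ga \<le> be" | "al \<le> ga" "be \<le> al" | "be \<le> ga" "al \<le> be" by linarith
  then show ?thesis
  proof cases
    case 1 thus ?thesis using core_ordered[OF _ _ g12 prod x y z] by blast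
  next
    case 2
    have p: "al*ga*be = 1" using prod by (simp add: mult_ac)
    from core_ordered[OF 2 b12 p x' z y] show ?thesis by (auto simp: algebra_simps)
  next
    case 3
    have p: "be*al*ga = 1" using prod by (simp add: mult_ac)
    from core_ordered[OF 3 g12 p y' x' z'] show ?thesis by (auto simp: algebra_simps)
  next
    case 4
    have p: "be*ga*al = 1" using prod by (simp add: mult_ac)
    from core_ordered[OF 4(2) 4(1) a12 p y z' x'] show ?thesis by (auto simp: algebra_simps)
  next
    case 5
    have p: "ga*al*be = 1" using prod by (simp add: mult_ac)
    from core_ordered[OF 5(1) 5(2) b12 p z' x y'] show ?thesis by (auto simp: algebra_simps)
  next
    case 6
    have p: "ga*be*al = 1" using prod by (simp add: mult_ac)
    from core_ordered[OF 6 a12 p z y' x] show ?thesis by (auto simp: algebra_simps)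
  qed
qed


lemma dist_sq:
  assumes "brick_data p u a"
  shows "(dist (brick_point p u a t) (brick_point p u a t'))^2 = ((t 1 - t' 1)*a 1)^2 + ((t 2 - t' 2)*a 2)^2 + ((t 3 - t' 3)*a 3)^2"
proof -
  from assms have o: "u 1 \<bullet> u 1 = 1" "u 2 \<bullet> u 2 = 1" "u 3 \<bullet> u 3 = 1" "u 1 \<bullet> u 2 = 0" "u 1 \<bullet> u 3 = 0"
    "u 2 \<bullet> u 1 = 0" "u 2 \<bullet> u 3 = 0" "u 3 \<bullet> u 1 = 0" "u 3 \<bullet> u 2 = 0" unfolding brick_data_def by auto
  define c1 where "c1 = (t 1 - t' 1)*a 1"
  define c2 where "c2 = (t 2 - t' 2)*a 2"
  define c3 where "c3 = (t 3 - t' 3)*a 3"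
  have d: "brick_point p u a t - brick_point p u a t' = c1 *\<^sub>R u 1 + c2 *\<^sub>R u 2 + c3 *\<^sub>R u 3"
    unfolding brick_point_def c1_def c2_def c3_def by (simp add: algebra_simps scaleR_diff_left)
  have "(dist (brick_point p u a t) (brick_point p u a t'))^2 = (c1 *\<^sub>R u 1 + c2 *\<^sub>R u 2 + c3 *\<^sub>R u 3) \<bullet> (c1 *\<^sub>R u 1 + c2 *\<^sub>R u 2 + c3 *\<^sub>R u 3)"
    by (simp add: dist_norm d power2_norm_eq_inner)
  also have "\<dots> = c1^2 + c2^2 + c3^2"
    using o by (simp add: inner_add_left inner_add_right power2_eq_square)
  finally show ?thesis by (simp add: c1_def c2_def c3_def)
qed

lemma edge_point:
  assumes "is_brick_edge p u a i E" "P \<in> E"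
  obtains c t where "\<forall>j\<in>{1,2,3}-{i}. c j = 0 \<or> c j = 1" "E = brick_edge p u a i c"
    "P = brick_point p u a t" "0 \<le> t i" "t i \<le> 1" "\<forall>j\<in>{1,2,3}-{i}. t j = c j"
  using assms unfolding is_brick_edge_def brick_edge_def by blast

lemma edges_meet:
  fixes i j k :: nat
  assumes ijk: "{1,2,3} = {i,j,k}" "i \<noteq> j" "i \<noteq> k" "j \<noteq> k"
    and ci: "\<forall>l\<in>{1,2,3}-{i}. c l = 0 \<or> c l = 1" and cj: "\<forall>l\<in>{1,2,3}-{j}. c' l = 0 \<or> c' l = 1"
    and eq: "c k = c' k"
  shows "brick_edge p u a i c \<inter> brick_edge p u a j c' \<noteq> {}"
proof -
  define t where "t = (\<lambda>l. if l = i then c' i else if l = j then c j else c k)"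
  have "i \<in> {1,2,3} - {j}" using ijk(1,2) by blast
  hence ti: "c' i = 0 \<or> c' i = 1" using cj by blast
  have "j \<in> {1,2,3} - {i}" using ijk(1,2) by blast
  hence tj: "c j = 0 \<or> c j = 1" using ci by blast
  have t_i: "t i = c' i" and t_j: "t j = c j" and t_k: "t k = c k" using ijk(2,3,4) by (simp_all add: t_def)
  have memI: "\<And>l. l \<in> {1,2,3} \<Longrightarrow> l = i \<or> l = j \<or> l = k" using ijk(1) by blast
  have "brick_point p u a t \<in> brick_edge p u a i c"
    unfolding brick_edge_def
  proof (intro CollectI exI conjI)
    show "brick_point p u a t = brick_point p u a t" by (rule refl)
    show "0 \<le> t i" "t i \<le> 1" using ti t_i by auto
    show "\<forall>l\<in>{1, 2, 3} - {i}. t l = c l"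
    proof
      fix l assume l: "l \<in> {1,2,3} - {i}"
      hence "l = j \<or> l = k" using memI by blast
      thus "t l = c l" using t_j t_k by blast
    qed
  qed
  moreover have "brick_point p u a t \<in> brick_edge p u a j c'"
    unfolding brick_edge_def
  proof (intro CollectI exI conjI)
    show "brick_point p u a t = brick_point p u a t" by (rule refl)
    show "0 \<le> t j" "t j \<le> 1" using tj t_j by auto
    show "\<forall>l\<in>{1, 2, 3} - {j}. t l = c' l"
    proof
      fix l assume l: "l \<in> {1,2,3} - {j}"
      hence "l = i \<or> l = k" using memI by blast
      thus "t l = c' l" using t_i t_k eq by auto
    qed
  qed
  ultimately show ?thesis by blast
qed

lemma flip01:
  fixes c c' X :: real
  assumes "c = 0 \<or> c = 1" "c' = 0 \<or> c' = 1" "c \<noteq> c'" "0 \<le> X" "X \<le> 1"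
  obtains x where "0 \<le> x" "x \<le> 1" "(X - c)^2 = x^2" "(c' - X)^2 = (1-x)^2" "(c - c')^2 = 1"
proof (cases "c = 0")
  case True
  hence "c' = 1" using assms by auto
  thus ?thesis using that[of X] True assms by (simp add: power2_commute)
next
  case False
  hence "c = 1" "c' = 0" using assms by auto
  thus ?thesis using that[of "1 - X"] assms by (simp add: power2_commute)
qed


theorem mainTheorem1:
  fixes p :: "real^3" and u :: "nat \<Rightarrow> real^3" and a :: "nat \<Rightarrow> real"
    and E1 E2 E3 :: "(real^3) set" and A B C :: "real^3"
  assumes "brick_data p u a"
    and "a 1 * a 2 * a 3 = 1"
    and "\<forall>i\<in>{1,2,3}. a i \<ge> 1 / sqrt 2"
    and "skew_edge_triple p u a E1 E2 E3"
    and "A \<in> E1" and "B \<in> E2" and "C \<in> E3"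
    and "\<not> collinear {A, B, C}"
  shows "dist A B \<le> sqrt 2 \<or> dist B C \<le> sqrt 2 \<or> dist C A \<le> sqrt 2"
proof -
  note bd = assms(1)
  from assms(4) have e1: "is_brick_edge p u a 1 E1" and e2: "is_brick_edge p u a 2 E2"
    and e3: "is_brick_edge p u a 3 E3" and d12: "E1 \<inter> E2 = {}" and d23: "E2 \<inter> E3 = {}"
    and d13: "E1 \<inter> E3 = {}" unfolding skew_edge_triple_def by auto
  obtain c1 tA where c1: "\<forall>j\<in>{1,2,3}-{1}. c1 j = 0 \<or> c1 j = 1" and E1: "E1 = brick_edge p u a 1 c1"
    and A: "A = brick_point p u a tA" "0 \<le> tA 1" "tA 1 \<le> 1" and tA: "\<forall>j\<in>{1,2,3}-{1}. tA j = c1 j"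
    using edge_point[OF e1 assms(5)] by blast
  obtain c2 tB where c2: "\<forall>j\<in>{1,2,3}-{2}. c2 j = 0 \<or> c2 j = 1" and E2: "E2 = brick_edge p u a 2 c2"
    and B: "B = brick_point p u a tB" "0 \<le> tB 2" "tB 2 \<le> 1" and tB: "\<forall>j\<in>{1,2,3}-{2}. tB j = c2 j"
    using edge_point[OF e2 assms(6)] by blast
  obtain c3 tC where c3: "\<forall>j\<in>{1,2,3}-{3}. c3 j = 0 \<or> c3 j = 1" and E3: "E3 = brick_edge p u a 3 c3"
    and C: "C = brick_point p u a tC" "0 \<le> tC 3" "tC 3 \<le> 1" and tC: "\<forall>j\<in>{1,2,3}-{3}. tC j = c3 j"
    using edge_point[OF e3 assms(7)] by blast
  have n12: "c1 3 \<noteq> c2 3"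
    using edges_meet[of 1 2 3 c1 c2 p u a] c1 c2 d12 E1 E2 by auto
  have n23: "c2 1 \<noteq> c3 1"
    using edges_meet[of 2 3 1 c2 c3 p u a] c2 c3 d23 E2 E3 by (auto simp: insert_commute)
  have n13: "c1 2 \<noteq> c3 2"
    using edges_meet[of 1 3 2 c1 c3 p u a] c1 c3 d13 E1 E3 by (auto simp: insert_commute)
  have v: "c1 2 = 0 \<or> c1 2 = 1" "c1 3 = 0 \<or> c1 3 = 1" "c2 1 = 0 \<or> c2 1 = 1" "c2 3 = 0 \<or> c2 3 = 1"
     "c3 1 = 0 \<or> c3 1 = 1" "c3 2 = 0 \<or> c3 2 = 1" using c1 c2 c3 by auto
  have tv: "tA 2 = c1 2" "tA 3 = c1 3" "tB 1 = c2 1" "tB 3 = c2 3" "tC 1 = c3 1" "tC 2 = c3 2"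
    using tA tB tC by auto
  obtain x where x: "0 \<le> x" "x \<le> 1" "(tA 1 - c2 1)^2 = x^2" "(c3 1 - tA 1)^2 = (1-x)^2" "(c2 1 - c3 1)^2 = 1"
    using flip01[OF v(3) v(5) n23 A(2) A(3)] by blast
  obtain y where y: "0 \<le> y" "y \<le> 1" "(tB 2 - c3 2)^2 = y^2" "(c1 2 - tB 2)^2 = (1-y)^2" "(c3 2 - c1 2)^2 = 1"
    using flip01[OF v(6) v(1) n13[symmetric] B(2) B(3)] by blast
  obtain z where z: "0 \<le> z" "z \<le> 1" "(tC 3 - c2 3)^2 = z^2" "(c1 3 - tC 3)^2 = (1-z)^2" "(c2 3 - c1 3)^2 = 1"
    using flip01[OF v(4) v(2) n12[symmetric] C(2) C(3)] by blast
  have pos: "\<forall>i\<in>{1,2,3}. a i > 0" using bd unfolding brick_data_def by auto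
  have sq: "\<And>i. i \<in> {1,2,3} \<Longrightarrow> 1/2 \<le> (a i)^2"
  proof -
    fix i :: nat assume i: "i \<in> {1,2,3}"
    have "1/sqrt 2 \<le> a i" using assms(3) i by auto
    hence "(1/sqrt 2)^2 \<le> (a i)^2" by (intro power_mono) auto
    thus "1/2 \<le> (a i)^2" by (simp add: power_divide)
  qed
  have prod: "(a 1)^2 * (a 2)^2 * (a 3)^2 = 1"
    using assms(2) by (metis power_mult_distrib power_one)
  have AB: "(dist A B)^2 = (a 1)^2*x^2 + (a 2)^2*(1-y)^2 + (a 3)^2"
  proof -
    have "(dist A B)^2 = ((tA 1 - tB 1)*a 1)^2 + ((tA 2 - tB 2)*a 2)^2 + ((tA 3 - tB 3)*a 3)^2"
      unfolding A(1) B(1) by (rule dist_sq[OF bd])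
    also have "\<dots> = (tA 1 - c2 1)^2*(a 1)^2 + (c1 2 - tB 2)^2*(a 2)^2 + (c1 3 - c2 3)^2*(a 3)^2"
      using tv by (simp add: power_mult_distrib)
    also have "(c1 3 - c2 3)^2 = 1" using z(5) by (simp add: power2_commute)
    finally show ?thesis using x(3) y(4) by (simp add: mult_ac)
  qed
  have BC: "(dist B C)^2 = (a 1)^2 + (a 2)^2*y^2 + (a 3)^2*z^2"
  proof -
    have "(dist B C)^2 = ((tB 1 - tC 1)*a 1)^2 + ((tB 2 - tC 2)*a 2)^2 + ((tB 3 - tC 3)*a 3)^2"
      unfolding B(1) C(1) by (rule dist_sq[OF bd])
    also have "\<dots> = (c2 1 - c3 1)^2*(a 1)^2 + (tB 2 - c3 2)^2*(a 2)^2 + (tC 3 - c2 3)^2*(a 3)^2"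
      using tv by (simp add: power_mult_distrib power2_commute)
    finally show ?thesis using x(5) y(3) z(3) by (simp add: mult_ac)
  qed
  have CA: "(dist C A)^2 = (a 1)^2*(1-x)^2 + (a 2)^2 + (a 3)^2*(1-z)^2"
  proof -
    have "(dist C A)^2 = ((tC 1 - tA 1)*a 1)^2 + ((tC 2 - tA 2)*a 2)^2 + ((tC 3 - tA 3)*a 3)^2"
      unfolding C(1) A(1) by (rule dist_sq[OF bd])
    also have "\<dots> = (c3 1 - tA 1)^2*(a 1)^2 + (c3 2 - c1 2)^2*(a 2)^2 + (c1 3 - tC 3)^2*(a 3)^2"
      using tv by (simp add: power_mult_distrib power2_commute)
    finally show ?thesis using x(4) y(5) z(4) by (simp add: mult_ac)
  qed
  have core: "(a 1)^2*x^2 + (a 2)^2*(1-y)^2 + (a 3)^2 \<le> 2 \<or> (a 1)^2 + (a 2)^2*y^2 + (a 3)^2*z^2 \<le> 2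
      \<or> (a 1)^2*(1-x)^2 + (a 2)^2 + (a 3)^2*(1-z)^2 \<le> 2"
    by (rule core_general[OF sq sq sq prod x(1,2) y(1,2) z(1,2)]) auto
  have r: "\<And>P Q :: real^3. (dist P Q)^2 \<le> 2 \<Longrightarrow> dist P Q \<le> sqrt 2" by (simp add: real_le_rsqrt)
  show ?thesis using core AB BC CA r by metis
qed


end
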